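(* Let $f:\mathbb{R}^p\to\mathbb{R}$ be convex and twice continuously differentiable (not necessarily strictly convex), with the setting below. Let $I\subset(0,\infty)$ be an open interval such that for every $\rho\in I$ the function $\mathcal{E}_\rho$ has a unique minimizer $\mathbf{x}(\rho)$, the map $\rho\mapsto\mathbf{x}(\rho)$ is continuous on $I$, the index sets computed at $\mathbf{x}(\rho)$ do not depend on $\rho\in I$, and the rows of $\mathbf{U}_{\mathcal{Z}}$ are linearly independent. Let $\mathbf{Y}\in\mathbb{R}^{p\times(p-|\mathcal{Z}|)}$ be a matrix whose columns form a basis of the null space $\{\mathbf{y}:\mathbf{U}_{\mathcal{Z}}\mathbf{y}=\mathbf{0}\}$, where $|\mathcal{Z}|=|\mathcal{Z}_E|+|\mathcal{Z}_I|$, and assume $\mathbf{Y}^t d^2f(\mathbf{x}(\rho))\mathbf{Y}$ is nonsingular for every $\rho\in I$. Then $\rho\mapsto\mathbf{x}(\rho)$ is differentiable on $I$ and $$\frac{d\mathbf{x}(\rho)}{d\rho}=-\mathbf{Y}\,[\mathbf{Y}^t\mathbf{H}(\mathbf{x}(\rho))\mathbf{Y}]^{-1}\mathbf{Y}^t\mathbf{u}_{\bar{\mathcal{Z}}},$$ where $\mathbf{H}(\mathbf{x})=d^2f(\mathbf{x})$.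
   Context: Setting: $g_i(\mathbf{x})=\mathbf{v}_i^t\mathbf{x}-d_i$ ($1\le i\le r$), $h_j(\mathbf{x})=\mathbf{w}_j^t\mathbf{x}-e_j$ ($1\le j\le s$); $\mathcal{E}_\rho(\mathbf{x})=f(\mathbf{x})+\rho\sum_i|g_i(\mathbf{x})|+\rho\sum_j\max\{0,h_j(\mathbf{x})\}$. Index sets at $\mathbf{x}$: $\mathcal{N}_E=\{i:g_i(\mathbf{x})<0\}$, $\mathcal{Z}_E=\{i:g_i(\mathbf{x})=0\}$, $\mathcal{P}_E=\{i:g_i(\mathbf{x})>0\}$, $\mathcal{N}_I=\{j:h_j(\mathbf{x})<0\}$, $\mathcal{Z}_I=\{j:h_j(\mathbf{x})=0\}$, $\mathcal{P}_I=\{j:h_j(\mathbf{x})>0\}$. $\mathbf{U}_{\mathcal{Z}}$ is the matrix with rows $\mathbf{v}_i^t$ ($i\in\mathcal{Z}_E$) and $\mathbf{w}_j^t$ ($j\in\mathcal{Z}_I$); $\mathbf{u}_{\bar{\mathcal{Z}}}=-\sum_{i\in\mathcal{N}_E}\mathbf{v}_i+\sum_{i\in\mathcal{P}_E}\mathbf{v}_i+\sum_{j\in\mathcal{P}_I}\mathbf{w}_j$. *)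

theory Defs
  imports "HOL-Analysis.Analysis"
begin

text \<open>Exact penalty function E_rho, with g_i(x) = v_i . x - d_i (1 <= i <= r),
  h_j(x) = w_j . x - e_j (1 <= j <= s).\<close>
definition penalty ::
  "('a::euclidean_space \<Rightarrow> real) \<Rightarrow> (nat \<Rightarrow> 'a) \<Rightarrow> (nat \<Rightarrow> real) \<Rightarrow> nat \<Rightarrow>
   (nat \<Rightarrow> 'a) \<Rightarrow> (nat \<Rightarrow> real) \<Rightarrow> nat \<Rightarrow> real \<Rightarrow> 'a \<Rightarrow> real" where
  "penalty f v d r w e s \<rho> x =
     f x + \<rho> * (\<Sum>i=1..r. \<bar>v i \<bullet> x - d i\<bar>) + \<rho> * (\<Sum>j=1..s. max 0 (w j \<bullet> x - e j))"

definition idxN :: "(nat \<Rightarrow> 'a::real_inner) \<Rightarrow> (nat \<Rightarrow> real) \<Rightarrow> nat \<Rightarrow> 'a \<Rightarrow> nat set" where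
  "idxN v d r x = {i \<in> {1..r}. v i \<bullet> x - d i < 0}"
definition idxZ :: "(nat \<Rightarrow> 'a::real_inner) \<Rightarrow> (nat \<Rightarrow> real) \<Rightarrow> nat \<Rightarrow> 'a \<Rightarrow> nat set" where
  "idxZ v d r x = {i \<in> {1..r}. v i \<bullet> x - d i = 0}"
definition idxP :: "(nat \<Rightarrow> 'a::real_inner) \<Rightarrow> (nat \<Rightarrow> real) \<Rightarrow> nat \<Rightarrow> 'a \<Rightarrow> nat set" where
  "idxP v d r x = {i \<in> {1..r}. v i \<bullet> x - d i > 0}"

definition u_barZ ::
  "(nat \<Rightarrow> 'a::real_inner) \<Rightarrow> (nat \<Rightarrow> real) \<Rightarrow> nat \<Rightarrow> (nat \<Rightarrow> 'a) \<Rightarrow> (nat \<Rightarrow> real) \<Rightarrow> nat \<Rightarrow> 'a \<Rightarrow> 'a" where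
  "u_barZ v d r w e s x =
     - (\<Sum>i\<in>idxN v d r x. v i) + (\<Sum>i\<in>idxP v d r x. v i) + (\<Sum>j\<in>idxP w e s x. w j)"

text \<open>Square k x k matrices represented as nat => nat => real (entries with indices < k).\<close>
definition kmat_mult :: "nat \<Rightarrow> (nat \<Rightarrow> nat \<Rightarrow> real) \<Rightarrow> (nat \<Rightarrow> nat \<Rightarrow> real) \<Rightarrow> nat \<Rightarrow> nat \<Rightarrow> real" where
  "kmat_mult k A B = (\<lambda>i j. \<Sum>l<k. A i l * B l j)"

definition kmat_is_inverse :: "nat \<Rightarrow> (nat \<Rightarrow> nat \<Rightarrow> real) \<Rightarrow> (nat \<Rightarrow> nat \<Rightarrow> real) \<Rightarrow> bool" where
  "kmat_is_inverse k M N \<longleftrightarrow>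
     (\<forall>i<k. \<forall>j<k. kmat_mult k M N i j = (if i = j then 1 else 0)
                \<and> kmat_mult k N M i j = (if i = j then 1 else 0))"

definition kmat_nonsingular :: "nat \<Rightarrow> (nat \<Rightarrow> nat \<Rightarrow> real) \<Rightarrow> bool" where
  "kmat_nonsingular k M \<longleftrightarrow> (\<exists>N. kmat_is_inverse k M N)"

text \<open>The inverse matrix (entries outside the k x k block set to 0 to make it unique).\<close>
definition kmat_inv :: "nat \<Rightarrow> (nat \<Rightarrow> nat \<Rightarrow> real) \<Rightarrow> nat \<Rightarrow> nat \<Rightarrow> real" where
  "kmat_inv k M = (THE N. kmat_is_inverse k M N \<and> (\<forall>i j. (k \<le> i \<or> k \<le> j) \<longrightarrow> N i j = 0))"

end

theory Submission
  imports Defs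
begin



lemma kmat_inv_inverse:
  assumes "kmat_nonsingular k M"
  shows "kmat_is_inverse k M (kmat_inv k M)"
proof -
  obtain N0 where N0: "kmat_is_inverse k M N0" using assms kmat_nonsingular_def by blast
  define N1 where "N1 = (\<lambda>i j. if i < k \<and> j < k then N0 i j else 0)"
  have eq1: "kmat_mult k M N1 i j = kmat_mult k M N0 i j" if "j < k" for i j
    using that by (auto simp: kmat_mult_def N1_def intro!: sum.cong)
  have eq2: "kmat_mult k N1 M i j = kmat_mult k N0 M i j" if "i < k" for i j
    using that by (auto simp: kmat_mult_def N1_def intro!: sum.cong)
  have N1: "kmat_is_inverse k M N1 \<and> (\<forall>i j. (k \<le> i \<or> k \<le> j) \<longrightarrow> N1 i j = 0)"
    using N0 eq1 eq2 by (auto simp: kmat_is_inverse_def N1_def)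
  have uniq: "N = N1" if "kmat_is_inverse k M N \<and> (\<forall>i j. (k \<le> i \<or> k \<le> j) \<longrightarrow> N i j = 0)" for N
  proof (rule ext, rule ext)
    fix i j
    show "N i j = N1 i j"
    proof (cases "i < k \<and> j < k")
      case True
      have "N i j = (\<Sum>l<k. N i l * (if l = j then 1 else 0))" using True by (simp add: if_distrib cong: if_cong)
      also have "\<dots> = (\<Sum>l<k. N i l * kmat_mult k M N1 l j)"
        using N1 True by (auto simp: kmat_is_inverse_def intro!: sum.cong)
      also have "\<dots> = (\<Sum>m<k. kmat_mult k N M i m * N1 m j)"
        unfolding kmat_mult_def sum_distrib_left sum_distrib_right
        by (subst sum.swap) (simp add: mult.assoc)
      also have "\<dots> = (\<Sum>m<k. (if i = m then 1 else 0) * N1 m j)"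
        using that True by (auto simp: kmat_is_inverse_def intro!: sum.cong)
      also have "\<dots> = (\<Sum>m<k. (if m = i then N1 m j else 0))" by (rule sum.cong) auto
      also have "\<dots> = N1 i j" using True by (simp add: sum.delta)
      finally show ?thesis .
    next
      case False
      then show ?thesis using that N1 by auto
    qed
  qed
  have "\<exists>!N. kmat_is_inverse k M N \<and> (\<forall>i j. (k \<le> i \<or> k \<le> j) \<longrightarrow> N i j = 0)"
    using N1 uniq by blast
  from theI'[OF this] show ?thesis unfolding kmat_inv_def by blast
qed



lemma stationary:
  fixes f :: "'a::euclidean_space \<Rightarrow> real"
  assumes grad: "(f has_derivative (\<lambda>h. g \<bullet> h)) (at x)"
    and min: "\<forall>y. penalty f v d r w e s \<rho> x \<le> penalty f v d r w e s \<rho> y"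
    and yv: "\<forall>i\<in>idxZ v d r x. v i \<bullet> y = 0" and yw: "\<forall>j\<in>idxZ w e s x. w j \<bullet> y = 0"
  shows "g \<bullet> y + \<rho> * (u_barZ v d r w e s x \<bullet> y) = 0"
proof -
  define \<sigma> where "\<sigma> i = (if v i \<bullet> x - d i < 0 then -1 else if v i \<bullet> x - d i > 0 then 1 else (0::real))" for i
  define \<tau> where "\<tau> j = (if w j \<bullet> x - e j > 0 then 1 else (0::real))" for j
  define A0 where "A0 = (\<Sum>i=1..r. \<bar>v i \<bullet> x - d i\<bar>)"
  define A1 where "A1 = (\<Sum>i=1..r. \<sigma> i * (v i \<bullet> y))"
  define B0 where "B0 = (\<Sum>j=1..s. max 0 (w j \<bullet> x - e j))"
  define B1 where "B1 = (\<Sum>j=1..s. \<tau> j * (w j \<bullet> y))"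
  have ev1: "\<forall>\<^sub>F t in nhds 0. \<bar>v i \<bullet> (x + t *\<^sub>R y) - d i\<bar> = \<bar>v i \<bullet> x - d i\<bar> + t * (\<sigma> i * (v i \<bullet> y))"
    if i: "i \<in> {1..r}" for i
  proof -
    define a where "a = v i \<bullet> x - d i"
    define b where "b = v i \<bullet> y"
    have eq: "v i \<bullet> (x + t *\<^sub>R y) - d i = a + t * b" for t
      by (simp add: a_def b_def inner_add_right)
    have lim: "((\<lambda>t. a + t * b) \<longlongrightarrow> a) (nhds 0)"
    proof -
      have "((\<lambda>t::real. t) \<longlongrightarrow> 0) (nhds 0)" by (rule filterlim_ident)
      then have "((\<lambda>t. a + t * b) \<longlongrightarrow> a + 0 * b) (nhds 0)" by (intro tendsto_intros)
      then show ?thesis by simp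
    qed
    consider "a < 0" | "a > 0" | "a = 0" by linarith
    then show ?thesis
    proof cases
      case 1
      have "\<forall>\<^sub>F t in nhds 0. a + t * b < 0" using order_tendstoD(2)[OF lim 1] .
      then show ?thesis
        by eventually_elim (use 1 in \<open>auto simp: eq \<sigma>_def a_def[symmetric] b_def[symmetric]\<close>)
    next
      case 2
      have "\<forall>\<^sub>F t in nhds 0. a + t * b > 0" using order_tendstoD(1)[OF lim 2] .
      then show ?thesis
        by eventually_elim (use 2 in \<open>auto simp: eq \<sigma>_def a_def[symmetric] b_def[symmetric]\<close>)
    next
      case 3
      then have "i \<in> idxZ v d r x" using i by (simp add: idxZ_def a_def)
      then have "b = 0" using yv b_def by auto
      then show ?thesis using 3 by (simp add: eq \<sigma>_def a_def[symmetric] b_def[symmetric])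
    qed
  qed
  have ev2: "\<forall>\<^sub>F t in nhds 0. max 0 (w j \<bullet> (x + t *\<^sub>R y) - e j) = max 0 (w j \<bullet> x - e j) + t * (\<tau> j * (w j \<bullet> y))"
    if j: "j \<in> {1..s}" for j
  proof -
    define a where "a = w j \<bullet> x - e j"
    define b where "b = w j \<bullet> y"
    have eq: "w j \<bullet> (x + t *\<^sub>R y) - e j = a + t * b" for t
      by (simp add: a_def b_def inner_add_right)
    have lim: "((\<lambda>t. a + t * b) \<longlongrightarrow> a) (nhds 0)"
    proof -
      have "((\<lambda>t::real. t) \<longlongrightarrow> 0) (nhds 0)" by (rule filterlim_ident)
      then have "((\<lambda>t. a + t * b) \<longlongrightarrow> a + 0 * b) (nhds 0)" by (intro tendsto_intros)
      then show ?thesis by simp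
    qed
    consider "a < 0" | "a > 0" | "a = 0" by linarith
    then show ?thesis
    proof cases
      case 1
      have "\<forall>\<^sub>F t in nhds 0. a + t * b < 0" using order_tendstoD(2)[OF lim 1] .
      then show ?thesis
        by eventually_elim (use 1 in \<open>auto simp: eq \<tau>_def a_def[symmetric] b_def[symmetric]\<close>)
    next
      case 2
      have "\<forall>\<^sub>F t in nhds 0. a + t * b > 0" using order_tendstoD(1)[OF lim 2] .
      then show ?thesis
        by eventually_elim (use 2 in \<open>auto simp: eq \<tau>_def a_def[symmetric] b_def[symmetric]\<close>)
    next
      case 3
      then have "j \<in> idxZ w e s x" using j by (simp add: idxZ_def a_def)
      then have "b = 0" using yw b_def by auto
      then show ?thesis using 3 by (simp add: eq \<tau>_def a_def[symmetric] b_def[symmetric])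
    qed
  qed
  have ev1': "\<forall>\<^sub>F t in nhds 0. \<forall>i\<in>{1..r}. \<bar>v i \<bullet> (x + t *\<^sub>R y) - d i\<bar> = \<bar>v i \<bullet> x - d i\<bar> + t * (\<sigma> i * (v i \<bullet> y))"
    using ev1 by (simp add: eventually_ball_finite)
  have ev2': "\<forall>\<^sub>F t in nhds 0. \<forall>j\<in>{1..s}. max 0 (w j \<bullet> (x + t *\<^sub>R y) - e j) = max 0 (w j \<bullet> x - e j) + t * (\<tau> j * (w j \<bullet> y))"
    using ev2 by (simp add: eventually_ball_finite)
  define \<psi> where "\<psi> t = f (x + t *\<^sub>R y) + \<rho> * (A0 + t * A1) + \<rho> * (B0 + t * B1)" for t
  have "\<forall>\<^sub>F t in nhds 0. penalty f v d r w e s \<rho> (x + t *\<^sub>R y) = \<psi> t"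
    using ev1' ev2'
  proof eventually_elim
    case (elim t)
    have "(\<Sum>i=1..r. \<bar>v i \<bullet> (x + t *\<^sub>R y) - d i\<bar>) = A0 + t * A1"
      using elim(1) by (simp add: A0_def A1_def sum.distrib sum_distrib_left)
    moreover have "(\<Sum>j=1..s. max 0 (w j \<bullet> (x + t *\<^sub>R y) - e j)) = B0 + t * B1"
      using elim(2) by (simp add: B0_def B1_def sum.distrib sum_distrib_left)
    ultimately show ?case by (simp add: penalty_def \<psi>_def)
  qed
  then obtain \<delta> where \<delta>: "\<delta> > 0" "\<forall>t. dist t 0 < \<delta> \<longrightarrow> penalty f v d r w e s \<rho> (x + t *\<^sub>R y) = \<psi> t"
    unfolding eventually_nhds_metric by blast
  have psi0: "\<psi> 0 = penalty f v d r w e s \<rho> x"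
    by (simp add: \<psi>_def penalty_def A0_def B0_def)
  have locmin: "\<forall>t. \<bar>0 - t\<bar> < \<delta> \<longrightarrow> \<psi> 0 \<le> \<psi> t"
  proof (intro allI impI)
    fix t assume "\<bar>0 - t\<bar> < \<delta>"
    then have "\<psi> t = penalty f v d r w e s \<rho> (x + t *\<^sub>R y)" using \<delta> by (simp add: dist_real_def)
    then show "\<psi> 0 \<le> \<psi> t" using psi0 min by simp
  qed
  have h1: "((\<lambda>t. x + t *\<^sub>R y) has_derivative (\<lambda>t. t *\<^sub>R y)) (at 0)"
    by (auto intro!: derivative_eq_intros)
  have "((\<lambda>t. f (x + t *\<^sub>R y)) has_derivative (\<lambda>t. g \<bullet> (t *\<^sub>R y))) (at 0)"
    using has_derivative_compose[OF h1, of f "\<lambda>h. g \<bullet> h"] grad by simp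
  moreover have "(\<lambda>t. g \<bullet> (t *\<^sub>R y)) = (*) (g \<bullet> y)" by (auto simp: fun_eq_iff)
  ultimately have hf: "((\<lambda>t. f (x + t *\<^sub>R y)) has_real_derivative (g \<bullet> y)) (at 0)"
    by (simp add: has_field_derivative_def)
  have "(\<psi> has_real_derivative (g \<bullet> y + \<rho> * A1 + \<rho> * B1)) (at 0)"
    unfolding \<psi>_def by (rule derivative_eq_intros hf | simp)+
  from DERIV_local_min[OF this \<delta>(1) locmin] have zero: "g \<bullet> y + \<rho> * A1 + \<rho> * B1 = 0" .
  have A1eq: "A1 = - (\<Sum>i\<in>idxN v d r x. v i \<bullet> y) + (\<Sum>i\<in>idxP v d r x. v i \<bullet> y)"
  proof -
    have "A1 = (\<Sum>i=1..r. if v i \<bullet> x - d i < 0 then - (v i \<bullet> y) else if v i \<bullet> x - d i > 0 then v i \<bullet> y else 0)"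
      unfolding A1_def \<sigma>_def by (rule sum.cong) auto
    also have "\<dots> = (\<Sum>i\<in>idxN v d r x. - (v i \<bullet> y)) + (\<Sum>i\<in>idxP v d r x. v i \<bullet> y)"
      apply (simp add: sum.If_cases)
      apply (intro arg_cong2[where f="(+)"] sum.cong)
         apply (auto simp: idxN_def idxP_def)
      done
    finally show ?thesis by (simp add: sum_negf)
  qed
  have B1eq: "B1 = (\<Sum>j\<in>idxP w e s x. w j \<bullet> y)"
  proof -
    have "B1 = (\<Sum>j=1..s. if w j \<bullet> x - e j > 0 then w j \<bullet> y else 0)"
      unfolding B1_def \<tau>_def by (rule sum.cong) auto
    also have "\<dots> = (\<Sum>j\<in>idxP w e s x. w j \<bullet> y)"
      by (simp add: sum.If_cases idxP_def) (rule sum.cong; auto)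
    finally show ?thesis .
  qed
  have "u_barZ v d r w e s x \<bullet> y = A1 + B1"
    by (simp add: u_barZ_def A1eq B1eq inner_add_left inner_diff_left inner_sum_left)
  then show ?thesis using zero by (simp add: algebra_simps)
qed



lemma span_list_coeffs:
  fixes Y :: "'a::real_vector list"
  assumes "distinct Y" "z \<in> span (set Y)"
  shows "\<exists>a. z = (\<Sum>l<length Y. a l *\<^sub>R Y ! l)"
proof -
  obtain c where c: "z = (\<Sum>v\<in>set Y. c v *\<^sub>R v)"
    using assms(2) span_finite[of "set Y"] by auto
  have "set Y = (!) Y ` {..<length Y}" by (auto simp: set_conv_nth)
  moreover have "inj_on ((!) Y) {..<length Y}" using assms(1) by (simp add: inj_on_nth)
  ultimately have "(\<Sum>v\<in>set Y. c v *\<^sub>R v) = (\<Sum>l<length Y. c (Y ! l) *\<^sub>R Y ! l)"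
    by (simp add: sum.reindex)
  then show ?thesis using c by (intro exI[of _ "\<lambda>l. c (Y ! l)"]) simp
qed

lemma psi_left_inverse:
  fixes H0 :: "real ^ 'p ^ 'p" and Y :: "(real ^ 'p) list"
  assumes dist: "distinct Y" and z: "z \<in> span (set Y)"
    and inv: "kmat_is_inverse (length Y) (\<lambda>i j. Y ! i \<bullet> (H0 *v Y ! j)) N"
  shows "(\<Sum>i<length Y. (\<Sum>j<length Y. N i j * (Y ! j \<bullet> (H0 *v z))) *\<^sub>R Y ! i) = z"
proof -
  define k where "k = length Y"
  define M where "M = (\<lambda>i j. Y ! i \<bullet> (H0 *v Y ! j))"
  obtain a where a: "z = (\<Sum>l<k. a l *\<^sub>R Y ! l)" using span_list_coeffs[OF dist z] k_def by blast
  have Hz: "H0 *v z = (\<Sum>l<k. a l *\<^sub>R (H0 *v Y ! l))"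
    unfolding a by (simp add: matrix_vector_mult_linear_continuous_at linear_sum[OF matrix_vector_mul_linear]
        linear_cmul[OF matrix_vector_mul_linear])
  have inner: "Y ! j \<bullet> (H0 *v z) = (\<Sum>l<k. M j l * a l)" for j
    by (simp add: Hz inner_sum_right M_def mult.commute)
  have coef: "(\<Sum>j<k. N i j * (Y ! j \<bullet> (H0 *v z))) = a i" if i: "i < k" for i
  proof -
    have "(\<Sum>j<k. N i j * (Y ! j \<bullet> (H0 *v z))) = (\<Sum>j<k. \<Sum>l<k. N i j * M j l * a l)"
      by (simp add: inner sum_distrib_left mult.assoc)
    also have "\<dots> = (\<Sum>l<k. (\<Sum>j<k. N i j * M j l) * a l)"
      by (subst sum.swap) (simp add: sum_distrib_right)
    also have "\<dots> = (\<Sum>l<k. (if l = i then a l else 0))"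
      using inv i unfolding kmat_is_inverse_def kmat_mult_def M_def[symmetric] k_def[symmetric]
      by (intro sum.cong) auto
    also have "\<dots> = a i" using i by (simp add: sum.delta)
    finally show ?thesis .
  qed
  have "(\<Sum>i<k. (\<Sum>j<k. N i j * (Y ! j \<bullet> (H0 *v z))) *\<^sub>R Y ! i) = (\<Sum>i<k. a i *\<^sub>R Y ! i)"
    by (rule sum.cong) (auto simp: coef)
  then show ?thesis using a k_def by simp
qed

theorem proposition4:
  fixes f :: "real ^ 'p \<Rightarrow> real"
    and grad :: "real ^ 'p \<Rightarrow> real ^ 'p"
    and H :: "real ^ 'p \<Rightarrow> real ^ 'p ^ 'p"
    and v :: "nat \<Rightarrow> real ^ 'p" and d :: "nat \<Rightarrow> real" and r :: nat
    and w :: "nat \<Rightarrow> real ^ 'p" and e :: "nat \<Rightarrow> real" and s :: nat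
    and I :: "real set"
    and x :: "real \<Rightarrow> real ^ 'p"
    and Y :: "(real ^ 'p) list"
  assumes convex: "convex_on UNIV f"
    and grad: "\<And>z. (f has_derivative (\<lambda>h. grad z \<bullet> h)) (at z)"
    and hess: "\<And>z. (grad has_derivative (\<lambda>h. H z *v h)) (at z)"
    and hess_cont: "continuous_on UNIV H"
    and I_open: "open I" and I_interval: "is_interval I" and I_ne: "I \<noteq> {}"
    and I_pos: "I \<subseteq> {0<..}"
    and minimizer: "\<And>\<rho>. \<rho> \<in> I \<Longrightarrow> \<forall>y. penalty f v d r w e s \<rho> (x \<rho>) \<le> penalty f v d r w e s \<rho> y"
    and unique: "\<And>\<rho> y. \<rho> \<in> I \<Longrightarrow> \<forall>z. penalty f v d r w e s \<rho> y \<le> penalty f v d r w e s \<rho> z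
                   \<Longrightarrow> y = x \<rho>"
    and x_cont: "continuous_on I x"
    and const_idx: "\<And>\<rho>1 \<rho>2. \<rho>1 \<in> I \<Longrightarrow> \<rho>2 \<in> I \<Longrightarrow>
         idxN v d r (x \<rho>1) = idxN v d r (x \<rho>2) \<and> idxZ v d r (x \<rho>1) = idxZ v d r (x \<rho>2) \<and>
         idxP v d r (x \<rho>1) = idxP v d r (x \<rho>2) \<and> idxN w e s (x \<rho>1) = idxN w e s (x \<rho>2) \<and>
         idxZ w e s (x \<rho>1) = idxZ w e s (x \<rho>2) \<and> idxP w e s (x \<rho>1) = idxP w e s (x \<rho>2)"
    and UZ_indep: "\<And>\<rho>. \<rho> \<in> I \<Longrightarrow>
         inj_on (case_sum v w) (idxZ v d r (x \<rho>) <+> idxZ w e s (x \<rho>)) \<and>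
         independent (case_sum v w ` (idxZ v d r (x \<rho>) <+> idxZ w e s (x \<rho>)))"
    and Y_len: "\<And>\<rho>. \<rho> \<in> I \<Longrightarrow>
         length Y = CARD('p) - (card (idxZ v d r (x \<rho>)) + card (idxZ w e s (x \<rho>)))"
    and Y_basis: "\<And>\<rho>. \<rho> \<in> I \<Longrightarrow> distinct Y \<and> independent (set Y) \<and>
         span (set Y) = {y. (\<forall>i\<in>idxZ v d r (x \<rho>). v i \<bullet> y = 0) \<and> (\<forall>j\<in>idxZ w e s (x \<rho>). w j \<bullet> y = 0)}"
    and nonsing: "\<And>\<rho>. \<rho> \<in> I \<Longrightarrow>
         kmat_nonsingular (length Y) (\<lambda>i j. Y ! i \<bullet> (H (x \<rho>) *v Y ! j))"
  shows "\<forall>\<rho>\<in>I. (x has_vector_derivative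
           (let k = length Y;
                Minv = kmat_inv k (\<lambda>i j. Y ! i \<bullet> (H (x \<rho>) *v Y ! j));
                b = (\<lambda>j. Y ! j \<bullet> u_barZ v d r w e s (x \<rho>))
            in - (\<Sum>i<k. (\<Sum>j<k. Minv i j * b j) *\<^sub>R Y ! i))) (at \<rho>)"
  
proof
  fix \<rho>0 assume \<rho>0: "\<rho>0 \<in> I"
  define x0 where "x0 = x \<rho>0"
  define H0 where "H0 = H x0"
  define k where "k = length Y"
  define M where "M = (\<lambda>i j. Y ! i \<bullet> (H0 *v Y ! j))"
  define N where "N = kmat_inv k M"
  define u where "u = u_barZ v d r w e s x0"
  define \<Psi> where "\<Psi> = (\<lambda>wv. \<Sum>i<k. (\<Sum>j<k. N i j * (Y ! j \<bullet> wv)) *\<^sub>R Y ! i)"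
  define D where "D = - \<Psi> u"
  have goal_eq: "(let k = length Y;
                Minv = kmat_inv k (\<lambda>i j. Y ! i \<bullet> (H (x \<rho>0) *v Y ! j));
                b = (\<lambda>j. Y ! j \<bullet> u_barZ v d r w e s (x \<rho>0))
            in - (\<Sum>i<k. (\<Sum>j<k. Minv i j * b j) *\<^sub>R Y ! i)) = D"
    by (simp add: Let_def D_def \<Psi>_def N_def M_def k_def H0_def x0_def u_def)
  have inv: "kmat_is_inverse k M N"
    unfolding N_def using nonsing[OF \<rho>0] kmat_inv_inverse by (simp add: M_def k_def H0_def x0_def)
  have dist: "distinct Y" using Y_basis[OF \<rho>0] by simp
  have \<Psi>lin: "linear \<Psi>"
  proof (rule linearI)
    fix a b :: "real ^ 'p"
    show "\<Psi> (a + b) = \<Psi> a + \<Psi> b"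
      by (simp add: \<Psi>_def inner_add_right distrib_left sum.distrib scaleR_add_left)
  next
    fix c :: real and a :: "real ^ 'p"
    have "(\<Sum>j<k. N i j * (Y ! j \<bullet> (c *\<^sub>R a))) = c * (\<Sum>j<k. N i j * (Y ! j \<bullet> a))" for i
      by (simp add: sum_distrib_left algebra_simps)
    then show "\<Psi> (c *\<^sub>R a) = c *\<^sub>R \<Psi> a"
      by (simp add: \<Psi>_def scaleR_sum_right)
  qed
  obtain B where B: "B > 0" "\<And>wv. norm (\<Psi> wv) \<le> B * norm wv"
    using linear_bounded_pos[OF \<Psi>lin] by blast
  have \<Psi>A: "\<Psi> (H0 *v z) = z" if "z \<in> span (set Y)" for z
    using psi_left_inverse[OF dist that, of H0 N] inv by (simp add: \<Psi>_def M_def k_def)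
  have \<Psi>0: "\<Psi> wv = 0" if "\<forall>j<k. Y ! j \<bullet> wv = 0" for wv
    using that by (simp add: \<Psi>_def)
  have u_const: "u_barZ v d r w e s (x \<rho>) = u" if "\<rho> \<in> I" for \<rho>
    using const_idx[OF that \<rho>0] by (simp add: u_def x0_def u_barZ_def)
  have stat: "Y ! j \<bullet> grad (x \<rho>) + \<rho> * (Y ! j \<bullet> u) = 0" if "\<rho> \<in> I" "j < k" for \<rho> j
  proof -
    have "Y ! j \<in> span (set Y)" using that(2) by (simp add: k_def span_base)
    then have n: "\<forall>i\<in>idxZ v d r (x \<rho>). v i \<bullet> Y ! j = 0" "\<forall>i\<in>idxZ w e s (x \<rho>). w i \<bullet> Y ! j = 0"
      using Y_basis[OF that(1)] by auto
    have "grad (x \<rho>) \<bullet> Y ! j + \<rho> * (u_barZ v d r w e s (x \<rho>) \<bullet> Y ! j) = 0"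
      by (rule stationary[OF grad minimizer[OF that(1)] n])
    then show ?thesis using u_const[OF that(1)] by (simp add: inner_commute)
  qed
  have inS: "x \<rho> - x0 \<in> span (set Y)" if "\<rho> \<in> I" for \<rho>
  proof -
    have z1: "idxZ v d r (x \<rho>) = idxZ v d r x0" "idxZ w e s (x \<rho>) = idxZ w e s x0"
      using const_idx[OF that \<rho>0] x0_def by auto
    have "(\<forall>i\<in>idxZ v d r x0. v i \<bullet> (x \<rho> - x0) = 0) \<and> (\<forall>j\<in>idxZ w e s x0. w j \<bullet> (x \<rho> - x0) = 0)"
      using z1 by (auto simp: idxZ_def inner_diff_right)
    then show ?thesis using Y_basis[OF \<rho>0] by (simp add: x0_def)
  qed
  have "(x has_vector_derivative D) (at \<rho>0)"
    unfolding has_vector_derivative_def has_derivative_at_alt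
  proof (intro conjI allI impI)
    show "bounded_linear (\<lambda>h. h *\<^sub>R D)" by (rule bounded_linear_scaleR_left)
    fix \<epsilon>0 :: real assume e: "\<epsilon>0 > 0"
    define \<epsilon> where "\<epsilon> = min (1 / (2 * B)) (\<epsilon>0 / (2 * B * (norm D + 1)))"
    have nD1: "norm D + 1 > 0" by (simp add: add_nonneg_pos)
    then have \<epsilon>pos: "\<epsilon> > 0" using B e by (simp add: \<epsilon>_def)
    have B\<epsilon>1: "B * \<epsilon> \<le> 1/2"
    proof -
      have e1: "\<epsilon> \<le> 1 / (2 * B)" by (simp add: \<epsilon>_def)
      have "B * \<epsilon> \<le> B * (1 / (2 * B))" using mult_left_mono[OF e1, of B] B by linarith
      also have "\<dots> = 1/2" using B by simp
      finally show ?thesis .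
    qed
    have B\<epsilon>2: "B * \<epsilon> \<le> \<epsilon>0 / (2 * (norm D + 1))"
    proof -
      have e1: "\<epsilon> \<le> \<epsilon>0 / (2 * B * (norm D + 1))" by (simp add: \<epsilon>_def)
      have "B * \<epsilon> \<le> B * (\<epsilon>0 / (2 * B * (norm D + 1)))" using mult_left_mono[OF e1, of B] B by linarith
      also have "\<dots> = (B * \<epsilon>0) / (B * (2 * (norm D + 1)))" by (simp add: ac_simps)
      also have "\<dots> = \<epsilon>0 / (2 * (norm D + 1))" using B by (simp add: mult_divide_mult_cancel_left)
      finally show ?thesis .
    qed
    have "(grad has_derivative (\<lambda>h. H x0 *v h)) (at x0)" by (rule hess)
    then obtain d1 where d1: "d1 > 0" "\<And>z. norm (z - x0) < d1 \<Longrightarrow>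
        norm (grad z - grad x0 - H0 *v (z - x0)) \<le> \<epsilon> * norm (z - x0)"
      unfolding has_derivative_at_alt H0_def using \<epsilon>pos by blast
    have "isCont x \<rho>0" using x_cont I_open \<rho>0 continuous_on_eq_continuous_at by blast
    then obtain d2 where d2: "d2 > 0" "\<And>\<rho>. dist \<rho> \<rho>0 < d2 \<Longrightarrow> dist (x \<rho>) (x \<rho>0) < d1"
      unfolding continuous_at_eps_delta using d1(1) by blast
    obtain d3 where d3: "d3 > 0" "ball \<rho>0 d3 \<subseteq> I" using I_open \<rho>0 openE by blast
    show "\<exists>d>0. \<forall>\<rho>. norm (\<rho> - \<rho>0) < d \<longrightarrow> norm (x \<rho> - x \<rho>0 - (\<rho> - \<rho>0) *\<^sub>R D) \<le> \<epsilon>0 * norm (\<rho> - \<rho>0)"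
    proof (intro exI[of _ "min d2 d3"] conjI allI impI)
      show "min d2 d3 > 0" using d2 d3 by simp
      fix \<rho> assume h: "norm (\<rho> - \<rho>0) < min d2 d3"
      have \<rho>I: "\<rho> \<in> I" using h d3 by (auto simp: dist_real_def)
      define hh where "hh = \<rho> - \<rho>0"
      define \<Delta> where "\<Delta> = x \<rho> - x0"
      define W where "W = grad (x \<rho>) - grad x0"
      define Er where "Er = W - H0 *v \<Delta>"
      have "norm \<Delta> < d1" using d2(2)[of \<rho>] h by (simp add: \<Delta>_def x0_def dist_norm dist_real_def)
      then have Er: "norm Er \<le> \<epsilon> * norm \<Delta>" using d1(2)[of "x \<rho>"] by (simp add: Er_def W_def \<Delta>_def)
      have "\<Psi> (W + hh *\<^sub>R u) = 0"
      proof (rule \<Psi>0, intro allI impI)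
        fix j assume j: "j < k"
        show "Y ! j \<bullet> (W + hh *\<^sub>R u) = 0"
          using stat[OF \<rho>I j] stat[OF \<rho>0 j]
          by (simp add: W_def hh_def x0_def inner_add_right inner_diff_right algebra_simps)
      qed
      then have \<Psi>W: "\<Psi> W = hh *\<^sub>R D"
        using \<Psi>lin by (simp add: linear_add linear_scale D_def eq_neg_iff_add_eq_0)
      have "\<Delta> = \<Psi> (H0 *v \<Delta>)" using \<Psi>A[OF inS[OF \<rho>I]] \<Delta>_def by simp
      also have "H0 *v \<Delta> = W - Er" by (simp add: Er_def)
      also have "\<Psi> (W - Er) = hh *\<^sub>R D - \<Psi> Er" using \<Psi>lin \<Psi>W by (simp add: linear_diff)
      finally have key: "\<Delta> - hh *\<^sub>R D = - \<Psi> Er" by simp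
      have nE: "norm (\<Delta> - hh *\<^sub>R D) \<le> (B * \<epsilon>) * norm \<Delta>"
      proof -
        have "norm (\<Delta> - hh *\<^sub>R D) \<le> B * norm Er" using key B(2)[of Er] by simp
        also have "\<dots> \<le> B * (\<epsilon> * norm \<Delta>)" using Er B(1) by (simp add: mult_left_mono)
        finally show ?thesis by (simp add: mult.assoc)
      qed
      have "norm \<Delta> \<le> norm (hh *\<^sub>R D) + norm (\<Delta> - hh *\<^sub>R D)" by (rule norm_triangle_sub)
      also have "\<dots> \<le> \<bar>hh\<bar> * norm D + (1/2) * norm \<Delta>"
        using nE B\<epsilon>1 mult_right_mono[OF B\<epsilon>1 norm_ge_zero[of \<Delta>]] by simp
      finally have nD: "norm \<Delta> \<le> 2 * \<bar>hh\<bar> * norm D" by simp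
      have "norm (\<Delta> - hh *\<^sub>R D) \<le> (B * \<epsilon>) * (2 * \<bar>hh\<bar> * norm D)"
      proof -
        have "0 \<le> B * \<epsilon>" using B \<epsilon>pos by simp
        from order_trans[OF nE mult_left_mono[OF nD this]] show ?thesis .
      qed
      also have "\<dots> \<le> (\<epsilon>0 / (2 * (norm D + 1))) * (2 * \<bar>hh\<bar> * norm D)"
        by (rule mult_right_mono[OF B\<epsilon>2]) simp
      also have "\<dots> = \<epsilon>0 * \<bar>hh\<bar> * (norm D / (norm D + 1))"
        using nD1 by (simp add: field_simps)
      also have "\<dots> \<le> \<epsilon>0 * \<bar>hh\<bar> * 1"
        using e nD1 by (intro mult_left_mono) (auto simp: divide_le_eq_1)
      finally show "norm (x \<rho> - x \<rho>0 - (\<rho> - \<rho>0) *\<^sub>R D) \<le> \<epsilon>0 * norm (\<rho> - \<rho>0)"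
        by (simp add: \<Delta>_def hh_def x0_def)
    qed
  qed
  then show "(x has_vector_derivative
           (let k = length Y;
                Minv = kmat_inv k (\<lambda>i j. Y ! i \<bullet> (H (x \<rho>0) *v Y ! j));
                b = (\<lambda>j. Y ! j \<bullet> u_barZ v d r w e s (x \<rho>0))
            in - (\<Sum>i<k. (\<Sum>j<k. Minv i j * b j) *\<^sub>R Y ! i))) (at \<rho>0)"
    using goal_eq by simp
qed

end
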